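(* Let $\mathcal{M}=(S,A,X,\delta,T,\rho)$ be a wpMDP whose target states are $T=\{t_0,\dots,t_n\}$ with $n\ge 1$ and $0=\rho(t_0)<\rho(t_1)<\dots<\rho(t_n)$, and let $\mathcal{G}(\mathcal{M})=(V,E)$. Let $\mathcal{N}$ be the pMDP obtained from $\mathcal{M}$ as follows: add two fresh states $\mathit{fin}$ and $\mathit{fail}$ (which become the only target states of $\mathcal{N}$, with weights $1$ and $0$), add a fresh action $a\notin A$, keep all transitions of $\mathcal{M}$, and for every $t\in T$ (which is no longer a target in $\mathcal{N}$) set $\delta'(t,a,\mathit{fin})=\rho(t)/\rho(t_n)$ and $\delta'(t,a,\mathit{fail})=1-\rho(t)/\rho(t_n)$ (all other new transitions being $0$). Then for every $v\in V$ and every $W\subseteq V$: $v\trianglelefteq W$ holds in $\mathcal{M}$ if and only if $v\trianglelefteq W$ holds in $\mathcal{N}$.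
   Context: A weighted parametric MDP (wpMDP) is a tuple $\mathcal{M}=(S,A,X,\delta,T,\rho)$ with finite sets $S$ of states, $A$ of actions, $X$ of parameters, a set $T\subseteq S$ of target states, a transition function $\delta:(S\setminus T)\times A\times S\to\mathbb{Q}[X]$ (polynomials with rational coefficients) and a weight function $\rho:T\to\mathbb{Q}$. Target states have no outgoing transitions. Its graph $\mathcal{G}(\mathcal{M})=(V,E)$ has vertex set $V=S\cup S_N$ where $S_N=(S\setminus T)\times A$ (state-action pairs), an edge $(s,(s,a))$ whenever $\delta(s,a,s')\not\equiv 0$ (not syntactically zero) for some $s'\in S$ other than the designated zero-weight target $\mathit{fail}$, and an edge $((s,a),s')$ whenever $\delta(s,a,s')\not\equiv 0$; $vE$ denotes the set of successors of $v$. A valuation $\mathsf{val}:X\to\mathbb{R}$ is graph-preserving if for all $s\in S\setminus T$, $a\in A$, $s'\in S$: $\delta(s,a,s')[\mathsf{val}]\ge 0$, $\sum_{s''\in S}\delta(s,a,s'')[\mathsf{val}]=1$, and $\delta(s,a,s')\not\equiv0$ implies $\delta(s,a,s')[\mathsf{val}]\neq 0$. A strategy is a map $\sigma:S\setminus T\to A$; together with $\mathsf{val}$ it induces a Markov chain moving from $s$ to $s'$ with probability $\delta(s,\sigma(s),s')[\mathsf{val}]$. For a state $s$, $\mathrm{Rew}^\sigma_{\mathsf{val}}(s)=\sum_{t\in T}\rho(t)\,\mathbb{P}^s[\Diamond t]$, where $\mathbb{P}^s[\Diamond t]$ is the probability of reaching $t$ from $s$ in that chain; for $(s,a)\in S_N$,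 $\mathrm{Rew}^\sigma_{\mathsf{val}}((s,a))=\sum_{s'\in (s,a)E}\delta(s,a,s')[\mathsf{val}]\cdot\mathrm{Rew}^\sigma_{\mathsf{val}}(s')$. Let $\mathrm{Rew}^*_{\mathsf{val}}(v)=\max_\sigma \mathrm{Rew}^\sigma_{\mathsf{val}}(v)$. A pMDP is a wpMDP with $T=\{\mathit{fin},\mathit{fail}\}$, $\rho(\mathit{fin})=1$, $\rho(\mathit{fail})=0$. Never-worse relation: for $v\in V$ and $W\subseteq V$, $v\trianglelefteq W$ iff for every graph-preserving valuation $\mathsf{val}$ there exists $w\in W$ with $\mathrm{Rew}^*_{\mathsf{val}}(v)\le \mathrm{Rew}^*_{\mathsf{val}}(w)$ (values computed in the respective model). *)

theory Defs
  imports Complex_Main "HOL-Library.Poly_Mapping"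
begin

text \<open>A polynomial in the parameters of type 'x is a finitely supported map from
monomials (finitely supported exponent vectors) to rational coefficients.
Syntactic zero is the zero polynomial.\<close>

type_synonym 'x mpoly = "('x \<Rightarrow>\<^sub>0 nat) \<Rightarrow>\<^sub>0 rat"

definition peval :: "'x mpoly \<Rightarrow> ('x \<Rightarrow> real) \<Rightarrow> real" where
  "peval p val = (\<Sum>mon\<in>Poly_Mapping.keys p. of_rat (Poly_Mapping.lookup p mon) * (\<Prod>y\<in>Poly_Mapping.keys mon. val y ^ Poly_Mapping.lookup mon y))"

definition pconst :: "rat \<Rightarrow> 'x mpoly" where
  "pconst c = Poly_Mapping.single 0 c"

record ('s, 'a, 'x) wpmdp =
  states  :: "'s set"
  actions :: "'a set"
  trans   :: "'s \<Rightarrow> 'a \<Rightarrow> 's \<Rightarrow> 'x mpoly"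
  targets :: "'s set"
  weight  :: "'s \<Rightarrow> rat"

definition enabled :: "('s, 'a, 'x) wpmdp \<Rightarrow> 's \<Rightarrow> 'a \<Rightarrow> bool" where
  "enabled M s a \<longleftrightarrow> (\<exists>s'\<in>states M. trans M s a s' \<noteq> 0)"

definition wf_wpmdp :: "('s, 'a, 'x) wpmdp \<Rightarrow> bool" where
  "wf_wpmdp M \<longleftrightarrow> finite (states M) \<and> finite (actions M) \<and> targets M \<subseteq> states M \<and>
     (\<forall>s a s'. trans M s a s' \<noteq> 0 \<longrightarrow>
        s \<in> states M - targets M \<and> a \<in> actions M \<and> s' \<in> states M) \<and>
     (\<forall>s\<in>states M - targets M. \<exists>a\<in>actions M. enabled M s a)"

definition graph_preserving :: "('s, 'a, 'x) wpmdp \<Rightarrow> ('x \<Rightarrow> real) \<Rightarrow> bool" where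
  "graph_preserving M val \<longleftrightarrow>
     (\<forall>s\<in>states M - targets M. \<forall>a\<in>actions M.
        (\<forall>s'\<in>states M. peval (trans M s a s') val \<ge> 0 \<and>
            (trans M s a s' \<noteq> 0 \<longrightarrow> peval (trans M s a s') val \<noteq> 0)) \<and>
        (enabled M s a \<longrightarrow> (\<Sum>s'\<in>states M. peval (trans M s a s') val) = 1))"

definition strategies :: "('s, 'a, 'x) wpmdp \<Rightarrow> ('s \<Rightarrow> 'a) set" where
  "strategies M = {\<sigma>. \<forall>s\<in>states M - targets M. \<sigma> s \<in> actions M \<and> enabled M s (\<sigma> s)}"

fun reach_within :: "('s, 'a, 'x) wpmdp \<Rightarrow> ('s \<Rightarrow> 'a) \<Rightarrow> ('x \<Rightarrow> real) \<Rightarrow> 's \<Rightarrow> nat \<Rightarrow> 's \<Rightarrow> real" where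
  "reach_within M \<sigma> val t 0 s = (if s = t then 1 else 0)"
| "reach_within M \<sigma> val t (Suc k) s =
     (if s = t then 1 else if s \<in> targets M then 0
      else (\<Sum>s'\<in>states M. peval (trans M s (\<sigma> s) s') val * reach_within M \<sigma> val t k s'))"

text \<open>Probability of eventually reaching t (measure of the union of the cylinder sets
of finite paths reaching t), i.e. the supremum of the bounded reachability probabilities.\<close>
definition reach_prob :: "('s, 'a, 'x) wpmdp \<Rightarrow> ('s \<Rightarrow> 'a) \<Rightarrow> ('x \<Rightarrow> real) \<Rightarrow> 's \<Rightarrow> 's \<Rightarrow> real" where
  "reach_prob M \<sigma> val s t = (SUP k. reach_within M \<sigma> val t k s)"

datatype ('s, 'a) vertex = SV 's | SAV 's 'a

definition vertices :: "('s, 'a, 'x) wpmdp \<Rightarrow> ('s, 'a) vertex set" where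
  "vertices M = SV ` states M \<union> {SAV s a | s a. s \<in> states M - targets M \<and> a \<in> actions M}"

definition rew_state :: "('s, 'a, 'x) wpmdp \<Rightarrow> ('s \<Rightarrow> 'a) \<Rightarrow> ('x \<Rightarrow> real) \<Rightarrow> 's \<Rightarrow> real" where
  "rew_state M \<sigma> val s = (\<Sum>t\<in>targets M. of_rat (weight M t) * reach_prob M \<sigma> val s t)"

fun rew :: "('s, 'a, 'x) wpmdp \<Rightarrow> ('s \<Rightarrow> 'a) \<Rightarrow> ('x \<Rightarrow> real) \<Rightarrow> ('s, 'a) vertex \<Rightarrow> real" where
  "rew M \<sigma> val (SV s) = rew_state M \<sigma> val s"
| "rew M \<sigma> val (SAV s a) =
     (\<Sum>s'\<in>{s'\<in>states M. trans M s a s' \<noteq> 0}. peval (trans M s a s') val * rew_state M \<sigma> val s')"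

definition rew_opt :: "('s, 'a, 'x) wpmdp \<Rightarrow> ('x \<Rightarrow> real) \<Rightarrow> ('s, 'a) vertex \<Rightarrow> real" where
  "rew_opt M val v = (SUP \<sigma>\<in>strategies M. rew M \<sigma> val v)"

definition never_worse :: "('s, 'a, 'x) wpmdp \<Rightarrow> ('s, 'a) vertex \<Rightarrow> ('s, 'a) vertex set \<Rightarrow> bool" where
  "never_worse M v W \<longleftrightarrow>
     (\<forall>val. graph_preserving M val \<longrightarrow> (\<exists>w\<in>W. rew_opt M val v \<le> rew_opt M val w))"

text \<open>States of N: Inl s for old states, Inr True = fin, Inr False = fail.
Actions of N: Some a for old actions, None = the fresh action.
The parameter tn is the target of maximal weight.\<close>

definition N_trans :: "('s, 'a, 'x) wpmdp \<Rightarrow> 's \<Rightarrow> 's + bool \<Rightarrow> 'a option \<Rightarrow> 's + bool \<Rightarrow> 'x mpoly" where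
  "N_trans M tn s a s' =
     (case (s, a, s') of
        (Inl x, Some b, Inl y) \<Rightarrow> trans M x b y
      | (Inl t, None, Inr True) \<Rightarrow>
          (if t \<in> targets M then pconst (weight M t / weight M tn) else 0)
      | (Inl t, None, Inr False) \<Rightarrow>
          (if t \<in> targets M then pconst (1 - weight M t / weight M tn) else 0)
      | _ \<Rightarrow> 0)"

definition to_pMDP :: "('s, 'a, 'x) wpmdp \<Rightarrow> 's \<Rightarrow> ('s + bool, 'a option, 'x) wpmdp" where
  "to_pMDP M tn =
     \<lparr> states = Inl ` states M \<union> {Inr True, Inr False},
       actions = Some ` actions M \<union> {None},
       trans = N_trans M tn,
       targets = {Inr True, Inr False},
       weight = (\<lambda>s. if s = Inr True then 1 else 0) \<rparr>"

fun embV :: "('s, 'a) vertex \<Rightarrow> ('s + bool, 'a option) vertex" where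
  "embV (SV s) = SV (Inl s)"
| "embV (SAV s a) = SAV (Inl s) (Some a)"

end

theory Submission
  imports Defs
begin

lemma peval_zero[simp]: "peval 0 val = 0"
  by (simp add: peval_def)

lemma peval_pconst[simp]: "peval (pconst c) val = of_rat c"
  by (simp add: peval_def pconst_def)

lemma pconst_eq_0[simp]: "pconst c = 0 \<longleftrightarrow> c = 0"
  by (metis lookup_single_eq lookup_zero pconst_def single_zero)

lemma N_trans_simps[simp]:
  "N_trans M tn (Inl x) (Some b) (Inl y) = trans M x b y"
  "N_trans M tn (Inl x) (Some b) (Inr z) = 0"
  "N_trans M tn (Inl x) None (Inl y) = 0"
  "N_trans M tn (Inl x) None (Inr True) = (if x \<in> targets M then pconst (weight M x / weight M tn) else 0)"
  "N_trans M tn (Inl x) None (Inr False) = (if x \<in> targets M then pconst (1 - weight M x / weight M tn) else 0)"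
  "N_trans M tn (Inr q) a z2 = 0"
  by (auto simp: N_trans_def split: option.splits sum.splits bool.splits)

lemma N_simps[simp]:
  "states (to_pMDP M tn) = Inl ` states M \<union> {Inr True, Inr False}"
  "actions (to_pMDP M tn) = Some ` actions M \<union> {None}"
  "trans (to_pMDP M tn) = N_trans M tn"
  "targets (to_pMDP M tn) = {Inr True, Inr False}"
  "weight (to_pMDP M tn) = (\<lambda>s. if s = Inr True then 1 else 0)"
  by (simp_all add: to_pMDP_def)

lemma sum_N:
  assumes "finite S"
  shows "(\<Sum>x\<in>Inl ` S \<union> {Inr True, Inr False}. f x) = (\<Sum>y\<in>S. f (Inl y)) + f (Inr True) + f (Inr False)"
proof -
  have "(\<Sum>x\<in>Inl ` S \<union> {Inr True, Inr False}. f x) = (\<Sum>x\<in>Inl ` S. f x) + (\<Sum>x\<in>{Inr True, Inr False}. f x)"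
    by (rule sum.union_disjoint) (use assms in auto)
  also have "(\<Sum>x\<in>Inl ` S. f x) = (\<Sum>y\<in>S. f (Inl y))"
    by (simp add: sum.reindex)
  finally show ?thesis by (simp add: add.assoc)
qed

lemma sum_N':
  assumes "finite S"
  shows "(\<Sum>x\<in>insert (Inr True) (insert (Inr False) (Inl ` S)). f x) = (\<Sum>y\<in>S. f (Inl y)) + f (Inr True) + f (Inr False)"
  using sum_N[OF assms, of f] by (simp add: insert_commute)

lemma Sup_div:
  fixes X :: "real set"
  assumes "C > 0" "X \<noteq> {}" "bdd_above X"
  shows "Sup ((\<lambda>x. x / C) ` X) = Sup X / C"
proof (rule antisym)
  show "Sup ((\<lambda>x. x / C) ` X) \<le> Sup X / C"
    using assms by (intro cSUP_least) (auto intro!: divide_right_mono cSup_upper)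
next
  have bd: "bdd_above ((\<lambda>x. x / C) ` X)"
    using assms(3) assms(1) by (metis bdd_above_image_mono divide_right_mono less_eq_real_def mono_def)
  have "Sup X \<le> C * Sup ((\<lambda>x. x / C) ` X)"
  proof (rule cSup_least[OF assms(2)])
    fix x assume "x \<in> X"
    then have "x / C \<le> Sup ((\<lambda>x. x / C) ` X)" using bd by (intro cSup_upper) auto
    then show "x \<le> C * Sup ((\<lambda>x. x / C) ` X)" using assms(1) by (simp add: field_simps)
  qed
  then show "Sup X / C \<le> Sup ((\<lambda>x. x / C) ` X)" using assms(1) by (simp add: field_simps)
qed

locale red =
  fixes M :: "('s, 'a, 'x) wpmdp" and n :: nat and t :: "nat \<Rightarrow> 's"
  assumes wf: "wf_wpmdp M"
    and n1: "n \<ge> 1"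
    and TT_def: "targets M = t ` {0..n}"
    and w0: "weight M (t 0) = 0"
    and winc: "\<forall>i<n. weight M (t i) < weight M (t (Suc i))"
begin

abbreviation "SS \<equiv> states M"
abbreviation "TT \<equiv> targets M"
abbreviation "AA \<equiv> actions M"
abbreviation "wn \<equiv> weight M (t n)"
abbreviation "NN \<equiv> to_pMDP M (t n)"
definition "cw u = weight M u / wn"

lemma finS: "finite SS" and finA: "finite AA" and TS: "TT \<subseteq> SS"
  using wf by (auto simp: wf_wpmdp_def)

lemma finT: "finite TT" using finS TS finite_subset by blast

lemma trans_nz: "trans M s a s' \<noteq> 0 \<Longrightarrow> s \<in> SS - TT \<and> a \<in> AA \<and> s' \<in> SS"
  using wf by (auto simp: wf_wpmdp_def)

lemma ex_en: "s \<in> SS - TT \<Longrightarrow> \<exists>a\<in>AA. enabled M s a"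
  using wf by (auto simp: wf_wpmdp_def)

lemma mono_w: "i \<le> j \<Longrightarrow> j \<le> n \<Longrightarrow> weight M (t i) \<le> weight M (t j)"
proof (induction j)
  case 0 then show ?case by simp
next
  case (Suc j)
  show ?case
  proof (cases "i = Suc j")
    case False
    then have "weight M (t i) \<le> weight M (t j)" using Suc by simp
    also have "\<dots> < weight M (t (Suc j))" using winc Suc.prems by simp
    finally show ?thesis by simp
  qed simp
qed

lemma wn_pos: "0 < wn"
proof -
  have "weight M (t 0) < weight M (t 1)" using winc n1 by (metis One_nat_def less_le_trans zero_less_one)
  also have "\<dots> \<le> wn" using mono_w n1 by simp
  finally show ?thesis using w0 by simp
qed

lemma w_bounds: "u \<in> TT \<Longrightarrow> 0 \<le> weight M u \<and> weight M u \<le> wn"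
  using mono_w[of 0] mono_w[of _ n] w0 TT_def by auto

lemma cw_bounds: "u \<in> TT \<Longrightarrow> 0 \<le> cw u \<and> cw u \<le> 1"
  using w_bounds[of u] wn_pos by (auto simp: cw_def divide_le_eq_1)

lemma N_trans_T_Some: "s \<in> TT \<Longrightarrow> N_trans M tn (Inl s) (Some b) z = 0"
  using trans_nz by (cases z) auto

lemma N_trans_nonT_None: "s \<notin> TT \<Longrightarrow> N_trans M tn (Inl s) None z = 0"
proof (cases z)
  case (Inr b) assume "s \<notin> TT" then show ?thesis using Inr by (cases b) auto
qed simp

lemma enabled_N_Some: "enabled NN (Inl s) (Some a) \<longleftrightarrow> enabled M s a"
  unfolding enabled_def by auto

lemma enabled_N_None: "enabled NN (Inl s) None \<longleftrightarrow> s \<in> TT"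
proof
  assume "enabled NN (Inl s) None"
  then show "s \<in> TT" unfolding enabled_def using N_trans_nonT_None by (metis N_simps(3))
next
  assume s: "s \<in> TT"
  show "enabled NN (Inl s) None"
  proof (cases "cw s = 0")
    case True
    then show ?thesis using s unfolding enabled_def by (auto simp: cw_def intro!: bexI[of _ "Inr False"])
  next
    case False
    then show ?thesis using s unfolding enabled_def by (auto simp: cw_def intro!: bexI[of _ "Inr True"])
  qed
qed

lemma gp_M_from_N: "graph_preserving NN val \<Longrightarrow> graph_preserving M val"
  unfolding graph_preserving_def
proof (intro ballI conjI impI)
  fix s a s'
  assume g: "\<forall>s\<in>states NN - targets NN. \<forall>a\<in>actions NN.
        (\<forall>s'\<in>states NN. 0 \<le> peval (trans NN s a s') val \<and>
            (trans NN s a s' \<noteq> 0 \<longrightarrow> peval (trans NN s a s') val \<noteq> 0)) \<and>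
        (enabled NN s a \<longrightarrow> (\<Sum>s'\<in>states NN. peval (trans NN s a s') val) = 1)"
    and s: "s \<in> SS - TT" and a: "a \<in> AA"
  have G: "(\<forall>s'\<in>states NN. 0 \<le> peval (trans NN (Inl s) (Some a) s') val \<and>
            (trans NN (Inl s) (Some a) s' \<noteq> 0 \<longrightarrow> peval (trans NN (Inl s) (Some a) s') val \<noteq> 0)) \<and>
        (enabled NN (Inl s) (Some a) \<longrightarrow> (\<Sum>s'\<in>states NN. peval (trans NN (Inl s) (Some a) s') val) = 1)"
    by (rule bspec[OF bspec[OF g]]) (use s a in auto)
  {
    assume "s' \<in> SS"
    then show "0 \<le> peval (trans M s a s') val"
      using G by (metis N_simps(1,3) N_trans_simps(1) UnI1 image_eqI)
    show "trans M s a s' \<noteq> 0 \<Longrightarrow> peval (trans M s a s') val \<noteq> 0"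
      using G \<open>s' \<in> SS\<close> by (metis N_simps(1,3) N_trans_simps(1) UnI1 image_eqI)
  }
  assume "enabled M s a"
  then have "(\<Sum>s'\<in>states NN. peval (trans NN (Inl s) (Some a) s') val) = 1"
    using G enabled_N_Some by blast
  then show "(\<Sum>s'\<in>SS. peval (trans M s a s') val) = 1"
    by (simp add: sum_N[OF finS] sum_N'[OF finS])
qed

lemma gp_N_from_M: 
  assumes g: "graph_preserving M val"
  shows "graph_preserving NN val"
  unfolding graph_preserving_def
proof (intro ballI)
  fix x a assume x: "x \<in> states NN - targets NN" and a: "a \<in> actions NN"
  then obtain s where xs: "x = Inl s" and s: "s \<in> SS" by auto
  show "(\<forall>s'\<in>states NN. 0 \<le> peval (trans NN x a s') val \<and>
            (trans NN x a s' \<noteq> 0 \<longrightarrow> peval (trans NN x a s') val \<noteq> 0)) \<and>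
        (enabled NN x a \<longrightarrow> (\<Sum>s'\<in>states NN. peval (trans NN x a s') val) = 1)"
  proof (cases a)
    case None
    show ?thesis
    proof (cases "s \<in> TT")
      case True
      have "0 \<le> cw s" "cw s \<le> 1" using cw_bounds[OF True] by auto
      then have "0 \<le> (of_rat (cw s) :: real)" "0 \<le> (of_rat (1 - cw s) :: real)"
        by (simp_all add: zero_le_of_rat_iff)
      then show ?thesis using True unfolding xs None
        by (auto simp: sum_N[OF finS] sum_N'[OF finS] cw_def of_rat_diff)
    next
      case False
      then show ?thesis unfolding xs None using N_trans_nonT_None enabled_N_None by simp
    qed
  next
    case (Some b)
    then have b: "b \<in> AA" using a by auto
    show ?thesis
    proof (cases "s \<in> TT")
      case True
      then show ?thesis unfolding xs Some using N_trans_T_Some enabled_def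
        by (metis N_simps(3) order_refl peval_zero)
    next
      case False
      then have sT: "s \<in> SS - TT" using s by simp
      have A: "\<forall>y\<in>SS. 0 \<le> peval (trans M s b y) val \<and> (trans M s b y \<noteq> 0 \<longrightarrow> peval (trans M s b y) val \<noteq> 0)"
        and B: "enabled M s b \<longrightarrow> (\<Sum>y\<in>SS. peval (trans M s b y) val) = 1"
        using g sT b unfolding graph_preserving_def by auto
      show ?thesis unfolding xs Some
      proof (intro conjI ballI impI)
        fix z assume "z \<in> states NN"
        then show "0 \<le> peval (trans NN (Inl s) (Some b) z) val"
          "trans NN (Inl s) (Some b) z \<noteq> 0 \<Longrightarrow> peval (trans NN (Inl s) (Some b) z) val \<noteq> 0"
          using A by auto
      next
        assume "enabled NN (Inl s) (Some b)"
        then show "(\<Sum>z\<in>states NN. peval (trans NN (Inl s) (Some b) z) val) = 1"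
          using B enabled_N_Some by (simp add: sum_N[OF finS] sum_N'[OF finS])
      qed
    qed
  qed
qed

lemma gp_iff: "graph_preserving NN val \<longleftrightarrow> graph_preserving M val"
  using gp_M_from_N gp_N_from_M by blast

definition corr :: "('s \<Rightarrow> 'a) \<Rightarrow> ('s + bool \<Rightarrow> 'a option) \<Rightarrow> bool" where
  "corr \<sigma> \<sigma>' \<longleftrightarrow> (\<forall>s\<in>SS - TT. \<sigma>' (Inl s) = Some (\<sigma> s)) \<and> (\<forall>s\<in>TT. \<sigma>' (Inl s) = None)"

lemma rwN_fin: "reach_within NN \<sigma>' val (Inr True) k (Inr True) = 1"
  by (cases k) auto

lemma rwN_fail: "reach_within NN \<sigma>' val (Inr True) k (Inr False) = 0"
  by (cases k) auto

lemma rwN_0: "reach_within NN \<sigma>' val (Inr True) 0 (Inl s) = 0"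
  by simp

lemma rwM_T: "s \<in> TT \<Longrightarrow> reach_within M \<sigma> val u k s = (if s = u then 1 else 0)"
  by (cases k) auto

lemma rwN_Suc_T:
  assumes c: "corr \<sigma> \<sigma>'" and s: "s \<in> TT"
  shows "reach_within NN \<sigma>' val (Inr True) (Suc k) (Inl s) = (\<Sum>u\<in>TT. of_rat (cw u) * reach_within M \<sigma> val u k s)"
proof -
  have n: "\<sigma>' (Inl s) = None" using c s by (auto simp: corr_def)
  have "reach_within NN \<sigma>' val (Inr True) (Suc k) (Inl s) = of_rat (cw s)"
    using s by (simp add: n sum_N'[OF finS] rwN_fin rwN_fail cw_def)
  also have "\<dots> = (\<Sum>u\<in>TT. of_rat (cw u) * reach_within M \<sigma> val u k s)"
    using s finT by (simp add: rwM_T[OF s] if_distrib[of "\<lambda>x. _ * x"] cong: if_cong)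
  finally show ?thesis .
qed

lemma rwN_Suc:
  assumes c: "corr \<sigma> \<sigma>'"
  shows "s \<in> SS \<Longrightarrow> reach_within NN \<sigma>' val (Inr True) (Suc k) (Inl s) = (\<Sum>u\<in>TT. of_rat (cw u) * reach_within M \<sigma> val u k s)"
proof (induction k arbitrary: s)
  case 0
  show ?case
  proof (cases "s \<in> TT")
    case True then show ?thesis using rwN_Suc_T[OF c] by blast
  next
    case False
    then have n: "\<sigma>' (Inl s) = Some (\<sigma> s)" using c 0 by (auto simp: corr_def)
    have "reach_within NN \<sigma>' val (Inr True) (Suc 0) (Inl s) = 0"
      using False by (simp add: n sum_N'[OF finS])
    moreover have "(\<Sum>u\<in>TT. of_rat (cw u) * reach_within M \<sigma> val u 0 s) = 0"
      using False by (intro sum.neutral) auto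
    ultimately show ?thesis by simp
  qed
next
  case (Suc k)
  show ?case
  proof (cases "s \<in> TT")
    case True then show ?thesis using rwN_Suc_T[OF c] by blast
  next
    case False
    then have n: "\<sigma>' (Inl s) = Some (\<sigma> s)" using c Suc.prems by (auto simp: corr_def)
    let ?p = "\<lambda>y. peval (trans M s (\<sigma> s) y) val"
    have "reach_within NN \<sigma>' val (Inr True) (Suc (Suc k)) (Inl s)
        = (\<Sum>y\<in>SS. ?p y * reach_within NN \<sigma>' val (Inr True) (Suc k) (Inl y))"
      using False by (simp add: n sum_N'[OF finS])
    also have "\<dots> = (\<Sum>y\<in>SS. ?p y * (\<Sum>u\<in>TT. of_rat (cw u) * reach_within M \<sigma> val u k y))"
      using Suc.IH by simp
    also have "\<dots> = (\<Sum>u\<in>TT. of_rat (cw u) * (\<Sum>y\<in>SS. ?p y * reach_within M \<sigma> val u k y))"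
      by (simp add: sum_distrib_left sum.swap[of _ SS] algebra_simps)
    also have "\<dots> = (\<Sum>u\<in>TT. of_rat (cw u) * reach_within M \<sigma> val u (Suc k) s)"
      using False by (intro sum.cong) auto
    finally show ?thesis .
  qed
qed

lemma p_nonneg: "graph_preserving M val \<Longrightarrow> \<sigma> \<in> strategies M \<Longrightarrow> s \<in> SS - TT \<Longrightarrow> y \<in> SS
  \<Longrightarrow> 0 \<le> peval (trans M s (\<sigma> s) y) val"
  unfolding graph_preserving_def strategies_def by auto

lemma p_sum: "graph_preserving M val \<Longrightarrow> \<sigma> \<in> strategies M \<Longrightarrow> s \<in> SS - TT
  \<Longrightarrow> (\<Sum>y\<in>SS. peval (trans M s (\<sigma> s) y) val) = 1"
  unfolding graph_preserving_def strategies_def by auto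

lemma rwM_bounds:
  assumes g: "graph_preserving M val" and st: "\<sigma> \<in> strategies M"
  shows "s \<in> SS \<Longrightarrow> 0 \<le> reach_within M \<sigma> val u k s \<and> reach_within M \<sigma> val u k s \<le> 1"
proof (induction k arbitrary: s)
  case 0 then show ?case by simp
next
  case (Suc k)
  show ?case
  proof (cases "s = u \<or> s \<in> TT")
    case True then show ?thesis by auto
  next
    case False
    let ?p = "\<lambda>y. peval (trans M s (\<sigma> s) y) val"
    have sT: "s \<in> SS - TT" using False Suc.prems by auto
    have e: "reach_within M \<sigma> val u (Suc k) s = (\<Sum>y\<in>SS. ?p y * reach_within M \<sigma> val u k y)"
      using False by simp
    have "(\<Sum>y\<in>SS. ?p y * reach_within M \<sigma> val u k y) \<le> (\<Sum>y\<in>SS. ?p y * 1)"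
      using Suc.IH p_nonneg[OF g st sT] by (intro sum_mono mult_left_mono) auto
    also have "\<dots> = 1" using p_sum[OF g st sT] by simp
    finally have "reach_within M \<sigma> val u (Suc k) s \<le> 1" using e by simp
    moreover have "0 \<le> reach_within M \<sigma> val u (Suc k) s"
      unfolding e using Suc.IH p_nonneg[OF g st sT] by (intro sum_nonneg) auto
    ultimately show ?thesis by simp
  qed
qed

lemma rwM_mono:
  assumes g: "graph_preserving M val" and st: "\<sigma> \<in> strategies M"
  shows "s \<in> SS \<Longrightarrow> reach_within M \<sigma> val u k s \<le> reach_within M \<sigma> val u (Suc k) s"
proof (induction k arbitrary: s)
  case 0
  have "0 \<le> reach_within M \<sigma> val u (Suc 0) s" using rwM_bounds[OF g st 0] by blast
  moreover have "reach_within M \<sigma> val u (Suc 0) s = 1" if "s = u" using that by simp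
  ultimately show ?case by (auto simp del: reach_within.simps(2))
next
  case (Suc k)
  show ?case
  proof (cases "s = u \<or> s \<in> TT")
    case True then show ?thesis by auto
  next
    case False
    have sT: "s \<in> SS - TT" using False Suc.prems by auto
    show ?thesis using False Suc.IH p_nonneg[OF g st sT]
      by (simp del: reach_within.simps(2) add: reach_within.simps(2)[of M \<sigma> val u "Suc k" s]
           reach_within.simps(2)[of M \<sigma> val u k s] ) (intro sum_mono mult_left_mono, auto)
  qed
qed

lemma rp_lim:
  assumes g: "graph_preserving M val" and st: "\<sigma> \<in> strategies M" and s: "s \<in> SS"
  shows "(\<lambda>k. reach_within M \<sigma> val u k s) \<longlonglongrightarrow> reach_prob M \<sigma> val s u"
    and "0 \<le> reach_prob M \<sigma> val s u" and "reach_prob M \<sigma> val s u \<le> 1"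
proof -
  have bd: "bdd_above (range (\<lambda>k. reach_within M \<sigma> val u k s))"
    using rwM_bounds[OF g st s] by (intro bdd_aboveI[of _ 1]) auto
  show "(\<lambda>k. reach_within M \<sigma> val u k s) \<longlonglongrightarrow> reach_prob M \<sigma> val s u"
    unfolding reach_prob_def
    by (rule LIMSEQ_incseq_SUP[OF bd]) (intro incseq_SucI rwM_mono[OF g st s])
  have "reach_within M \<sigma> val u 0 s \<le> reach_prob M \<sigma> val s u"
    unfolding reach_prob_def by (rule cSUP_upper[OF _ bd]) simp
  then show "0 \<le> reach_prob M \<sigma> val s u" using rwM_bounds[OF g st s, of u 0] by linarith
  show "reach_prob M \<sigma> val s u \<le> 1"
    unfolding reach_prob_def using rwM_bounds[OF g st s] by (intro cSUP_least) auto
qed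

lemma rp_N:
  assumes g: "graph_preserving M val" and st: "\<sigma> \<in> strategies M" and c: "corr \<sigma> \<sigma>'" and s: "s \<in> SS"
  shows "reach_prob NN \<sigma>' val (Inl s) (Inr True) = (\<Sum>u\<in>TT. of_rat (cw u) * reach_prob M \<sigma> val s u)"
proof -
  define gg where "gg k = reach_within NN \<sigma>' val (Inr True) k (Inl s)" for k
  define L where "L = (\<Sum>u\<in>TT. of_rat (cw u) * reach_prob M \<sigma> val s u)"
  have cw0: "u \<in> TT \<Longrightarrow> 0 \<le> (of_rat (cw u) :: real)" for u using cw_bounds[of u] by (simp add: zero_le_of_rat_iff)
  have gS: "gg (Suc k) = (\<Sum>u\<in>TT. of_rat (cw u) * reach_within M \<sigma> val u k s)" for k
    unfolding gg_def using rwN_Suc[OF c s] .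
  have "(\<lambda>k. gg (Suc k)) \<longlonglongrightarrow> L"
    unfolding gS L_def by (intro tendsto_sum tendsto_mult_left rp_lim(1)[OF g st s])
  then have lim: "gg \<longlonglongrightarrow> L" by (rule LIMSEQ_imp_Suc)
  have inc: "incseq gg"
  proof (rule incseq_SucI)
    fix k show "gg k \<le> gg (Suc k)"
    proof (cases k)
      case 0
      have "0 \<le> gg (Suc 0)" unfolding gS using cw0 rwM_bounds[OF g st s]
        by (intro sum_nonneg mult_nonneg_nonneg) auto
      then show ?thesis using 0 by (simp add: gg_def)
    next
      case (Suc k')
      show ?thesis unfolding Suc gS using cw0 rwM_mono[OF g st s]
        by (intro sum_mono mult_left_mono) auto
    qed
  qed
  have bd: "bdd_above (range gg)" using incseq_le[OF inc lim] by (intro bdd_aboveI[of _ L]) auto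
  have "gg \<longlonglongrightarrow> (SUP k. gg k)" by (rule LIMSEQ_incseq_SUP[OF bd inc])
  then have "(SUP k. gg k) = L" using lim LIMSEQ_unique by blast
  then show ?thesis unfolding reach_prob_def gg_def L_def .
qed

lemma rs_N:
  assumes g: "graph_preserving M val" and st: "\<sigma> \<in> strategies M" and c: "corr \<sigma> \<sigma>'" and s: "s \<in> SS"
  shows "rew_state NN \<sigma>' val (Inl s) = rew_state M \<sigma> val s / of_rat wn"
proof -
  have "rew_state NN \<sigma>' val (Inl s) = reach_prob NN \<sigma>' val (Inl s) (Inr True)"
    unfolding rew_state_def by simp
  also have "\<dots> = (\<Sum>u\<in>TT. of_rat (cw u) * reach_prob M \<sigma> val s u)" by (rule rp_N[OF g st c s])
  also have "\<dots> = rew_state M \<sigma> val s / of_rat wn"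
    unfolding rew_state_def cw_def by (simp add: sum_divide_distrib of_rat_divide)
  finally show ?thesis .
qed

lemma rew_N:
  assumes g: "graph_preserving M val" and st: "\<sigma> \<in> strategies M" and c: "corr \<sigma> \<sigma>'" and v: "v \<in> vertices M"
  shows "rew NN \<sigma>' val (embV v) = rew M \<sigma> val v / of_rat wn"
proof (cases v)
  case (SV s)
  then show ?thesis using v rs_N[OF g st c] by (auto simp: vertices_def)
next
  case (SAV s a)
  then have s: "s \<in> SS - TT" and a: "a \<in> AA" using v by (auto simp: vertices_def)
  have set: "{z \<in> states NN. trans NN (Inl s) (Some a) z \<noteq> 0} = Inl ` {y \<in> SS. trans M s a y \<noteq> 0}"
    by auto
  have "rew NN \<sigma>' val (embV v) = (\<Sum>z\<in>Inl ` {y \<in> SS. trans M s a y \<noteq> 0}. peval (trans NN (Inl s) (Some a) z) val * rew_state NN \<sigma>' val z)"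
    unfolding SAV embV.simps rew.simps set[symmetric] ..
  also have "\<dots> = (\<Sum>y\<in>{y \<in> SS. trans M s a y \<noteq> 0}. peval (trans M s a y) val * (rew_state M \<sigma> val y / of_rat wn))"
    by (subst sum.reindex) (auto simp: rs_N[OF g st c])
  also have "\<dots> = rew M \<sigma> val v / of_rat wn"
    unfolding SAV rew.simps by (simp add: sum_divide_distrib)
  finally show ?thesis .
qed

definition "ext \<sigma> = (\<lambda>x. case x of Inl s \<Rightarrow> if s \<in> TT then None else Some (\<sigma> s) | Inr _ \<Rightarrow> None)"
definition "res \<sigma>' = (\<lambda>s. case \<sigma>' (Inl s) of Some a \<Rightarrow> a | None \<Rightarrow> undefined)"

lemma ext_strat:
  assumes st: "\<sigma> \<in> strategies M"
  shows "ext \<sigma> \<in> strategies NN" and "corr \<sigma> (ext \<sigma>)"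
proof -
  show "corr \<sigma> (ext \<sigma>)" by (auto simp: corr_def ext_def)
  show "ext \<sigma> \<in> strategies NN"
    unfolding strategies_def
  proof (intro CollectI ballI)
    fix x assume "x \<in> states NN - targets NN"
    then obtain s where x: "x = Inl s" and s: "s \<in> SS" by auto
    show "ext \<sigma> x \<in> actions NN \<and> enabled NN x (ext \<sigma> x)"
    proof (cases "s \<in> TT")
      case True then show ?thesis by (simp add: x ext_def enabled_N_None)
    next
      case False
      then show ?thesis using st s by (simp add: x ext_def enabled_N_Some strategies_def)
    qed
  qed
qed

lemma res_strat:
  assumes st: "\<sigma>' \<in> strategies NN"
  shows "res \<sigma>' \<in> strategies M" and "corr (res \<sigma>') \<sigma>'"
proof -
  have A: "\<sigma>' (Inl s) = Some (res \<sigma>' s) \<and> res \<sigma>' s \<in> AA \<and> enabled M s (res \<sigma>' s)" if s: "s \<in> SS - TT" for s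
  proof -
    have "\<sigma>' (Inl s) \<in> actions NN" "enabled NN (Inl s) (\<sigma>' (Inl s))"
      using st s by (auto simp: strategies_def)
    then obtain a where a: "\<sigma>' (Inl s) = Some a" "a \<in> AA" using s enabled_N_None by auto
    then show ?thesis using \<open>enabled NN (Inl s) (\<sigma>' (Inl s))\<close> enabled_N_Some by (simp add: res_def)
  qed
  have B: "\<sigma>' (Inl s) = None" if s: "s \<in> TT" for s
  proof (rule ccontr)
    assume "\<sigma>' (Inl s) \<noteq> None"
    then obtain b where b: "\<sigma>' (Inl s) = Some b" by auto
    have "enabled NN (Inl s) (\<sigma>' (Inl s))" using st s TS by (auto simp: strategies_def)
    then have "enabled M s b" using b enabled_N_Some by simp
    then show False using trans_nz s by (auto simp: enabled_def)
  qed
  show "res \<sigma>' \<in> strategies M" using A by (auto simp: strategies_def)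
  show "corr (res \<sigma>') \<sigma>'" using A B by (auto simp: corr_def)
qed

lemma strat_ne: "strategies M \<noteq> {}"
proof -
  define \<sigma> where "\<sigma> s = (SOME a. a \<in> AA \<and> enabled M s a)" for s
  have "\<sigma> \<in> strategies M"
    unfolding strategies_def
  proof (intro CollectI ballI)
    fix s assume "s \<in> SS - TT"
    then obtain a where "a \<in> AA \<and> enabled M s a" using ex_en by blast
    then show "\<sigma> s \<in> AA \<and> enabled M s (\<sigma> s)" unfolding \<sigma>_def by (rule someI[of "\<lambda>a. a \<in> AA \<and> enabled M s a"])
  qed
  then show ?thesis by blast
qed

abbreviation "BB \<equiv> (\<Sum>u\<in>TT. (of_rat (weight M u) :: real))"

lemma rs_bounds:
  assumes g: "graph_preserving M val" and st: "\<sigma> \<in> strategies M" and s: "s \<in> SS"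
  shows "0 \<le> rew_state M \<sigma> val s \<and> rew_state M \<sigma> val s \<le> BB"
proof -
  have w: "u \<in> TT \<Longrightarrow> 0 \<le> (of_rat (weight M u) :: real)" for u using w_bounds[of u] by (simp add: zero_le_of_rat_iff)
  have "0 \<le> rew_state M \<sigma> val s" unfolding rew_state_def using w rp_lim(2)[OF g st s]
    by (intro sum_nonneg mult_nonneg_nonneg) auto
  moreover have "rew_state M \<sigma> val s \<le> BB" unfolding rew_state_def
  proof (rule sum_mono)
    fix u assume "u \<in> TT"
    then show "of_rat (weight M u) * reach_prob M \<sigma> val s u \<le> of_rat (weight M u)"
      using w[of u] rp_lim(3)[OF g st s, of u] by (intro mult_left_le)
  qed
  ultimately show ?thesis by simp
qed

lemma rew_bound:
  assumes g: "graph_preserving M val" and st: "\<sigma> \<in> strategies M" and v: "v \<in> vertices M"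
  shows "rew M \<sigma> val v \<le> BB"
proof (cases v)
  case (SV s)
  then show ?thesis using v rs_bounds[OF g st] by (auto simp: vertices_def)
next
  case (SAV s a)
  then have s: "s \<in> SS - TT" and a: "a \<in> AA" using v by (auto simp: vertices_def)
  let ?sub = "{y \<in> SS. trans M s a y \<noteq> 0}"
  let ?p = "\<lambda>y. peval (trans M s a y) val"
  have p0: "y \<in> SS \<Longrightarrow> 0 \<le> ?p y" for y using g s a by (auto simp: graph_preserving_def)
  have B0: "0 \<le> BB" using rs_bounds[OF g st] TS s by fastforce
  have "rew M \<sigma> val v = (\<Sum>y\<in>?sub. ?p y * rew_state M \<sigma> val y)" using SAV by simp
  also have "\<dots> \<le> (\<Sum>y\<in>?sub. ?p y * BB)"
    using p0 rs_bounds[OF g st] by (intro sum_mono mult_left_mono) auto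
  also have "\<dots> = BB * (\<Sum>y\<in>?sub. ?p y)" by (simp add: sum_distrib_left mult.commute)
  also have "\<dots> \<le> BB * 1"
  proof (rule mult_left_mono[OF _ B0])
    show "(\<Sum>y\<in>?sub. ?p y) \<le> 1"
    proof (cases "enabled M s a")
      case True
      then have "(\<Sum>y\<in>SS. ?p y) = 1" using g s a by (auto simp: graph_preserving_def)
      moreover have "(\<Sum>y\<in>?sub. ?p y) \<le> (\<Sum>y\<in>SS. ?p y)"
        using p0 finS by (intro sum_mono2) auto
      ultimately show ?thesis by simp
    next
      case False
      then have "?sub = {}" by (auto simp: enabled_def)
      then show ?thesis by simp
    qed
  qed
  finally show ?thesis by simp
qed

lemma rew_opt_N:
  assumes g: "graph_preserving M val" and v: "v \<in> vertices M"
  shows "rew_opt NN val (embV v) = rew_opt M val v / of_rat wn"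
proof -
  have img: "(\<lambda>\<sigma>'. rew NN \<sigma>' val (embV v)) ` strategies NN
      = (\<lambda>x. x / of_rat wn) ` ((\<lambda>\<sigma>. rew M \<sigma> val v) ` strategies M)"
  proof (intro equalityI subsetI)
    fix x assume "x \<in> (\<lambda>\<sigma>'. rew NN \<sigma>' val (embV v)) ` strategies NN"
    then obtain \<sigma>' where s': "\<sigma>' \<in> strategies NN" and x: "x = rew NN \<sigma>' val (embV v)" by auto
    then have "x = rew M (res \<sigma>') val v / of_rat wn"
      using rew_N[OF g res_strat[OF s'] v] by simp
    then show "x \<in> (\<lambda>x. x / of_rat wn) ` ((\<lambda>\<sigma>. rew M \<sigma> val v) ` strategies M)"
      using res_strat(1)[OF s'] by blast
  next
    fix x assume "x \<in> (\<lambda>x. x / of_rat wn) ` ((\<lambda>\<sigma>. rew M \<sigma> val v) ` strategies M)"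
    then obtain \<sigma> where s: "\<sigma> \<in> strategies M" and x: "x = rew M \<sigma> val v / of_rat wn" by auto
    then have "x = rew NN (ext \<sigma>) val (embV v)"
      using rew_N[OF g s ext_strat(2)[OF s] v] by simp
    then show "x \<in> (\<lambda>\<sigma>'. rew NN \<sigma>' val (embV v)) ` strategies NN"
      using ext_strat(1)[OF s] by blast
  qed
  have "0 < (of_rat wn :: real)" using wn_pos by simp
  moreover have "(\<lambda>\<sigma>. rew M \<sigma> val v) ` strategies M \<noteq> {}" using strat_ne by simp
  moreover have "bdd_above ((\<lambda>\<sigma>. rew M \<sigma> val v) ` strategies M)"
    using rew_bound[OF g _ v] by (intro bdd_aboveI[of _ BB]) auto
  ultimately show ?thesis unfolding rew_opt_def img by (rule Sup_div)
qed

lemma main: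
  assumes v: "v \<in> vertices M" and W: "W \<subseteq> vertices M"
  shows "never_worse M v W \<longleftrightarrow> never_worse NN (embV v) (embV ` W)"
proof -
  have C: "0 < (of_rat wn :: real)" using wn_pos by simp
  have "(\<exists>w\<in>W. rew_opt M val v \<le> rew_opt M val w) \<longleftrightarrow>
        (\<exists>w\<in>embV ` W. rew_opt NN val (embV v) \<le> rew_opt NN val w)"
    if g: "graph_preserving M val" for val
  proof -
    have "(\<exists>w\<in>embV ` W. rew_opt NN val (embV v) \<le> rew_opt NN val w) \<longleftrightarrow>
          (\<exists>w\<in>W. rew_opt NN val (embV v) \<le> rew_opt NN val (embV w))" by blast
    also have "\<dots> \<longleftrightarrow> (\<exists>w\<in>W. rew_opt M val v / of_rat wn \<le> rew_opt M val w / of_rat wn)"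
      using rew_opt_N[OF g] v W by (intro bex_cong) auto
    also have "\<dots> \<longleftrightarrow> (\<exists>w\<in>W. rew_opt M val v \<le> rew_opt M val w)"
      using C by (simp add: divide_le_cancel)
    finally show ?thesis by simp
  qed
  then show ?thesis unfolding never_worse_def gp_iff by blast
qed

end

theorem theorem1:
  fixes M :: "('s, 'a, 'x) wpmdp" and n :: nat and t :: "nat \<Rightarrow> 's"
  assumes "wf_wpmdp M"
    and "n \<ge> 1"
    and "targets M = t ` {0..n}"
    and "weight M (t 0) = 0"
    and "\<forall>i<n. weight M (t i) < weight M (t (Suc i))"
  shows "\<forall>v\<in>vertices M. \<forall>W\<subseteq>vertices M.
           never_worse M v W \<longleftrightarrow> never_worse (to_pMDP M (t n)) (embV v) (embV ` W)"
proof -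
  interpret red M n t using assms by unfold_locales
  show ?thesis using main by blast
qed


end
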